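(* For all integers $0\le k\le n$ and all $x$, \[ \sum_{j=0}^{n-k}\binom{n-k}{j}B_{j+k}(x)=\sum_{j=0}^{k}\binom{k}{j}(-1)^{j}B_{n-j}(x)+\big(nx-(n-k)\big)x^{n-k-1}(x-1)^{k-1}, \] where the last term is understood as the polynomial $\frac{d}{dx}\left[x^{n-k}(x-1)^k\right]$ (to which it is equal after cancellation, also in the cases $k=0$ or $k=n$).
   Context: The Bernoulli polynomials are defined by $\sum_{n\ge0}B_n(x)\frac{t^n}{n!}=\frac{te^{xt}}{e^t-1}$. *)

theory Defs
  imports "HOL-Computational_Algebra.Computational_Algebra"
begin

definition bernpoly :: "nat \<Rightarrow> real \<Rightarrow> real" where
  "bernpoly n x = fact n * fps_nth (fps_X * fps_exp x / (fps_exp 1 - 1)) n"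

end

theory Submission
  imports Defs
begin
lemma G_mult:
  fixes x :: real
  shows "(fps_X * fps_exp x / (fps_exp 1 - 1)) * (fps_exp 1 - 1) = fps_X * fps_exp x"
proof -
  have s1: "subdegree (fps_exp (1::real) - 1) = 1"
    by (rule subdegreeI) auto
  have s2: "subdegree (fps_X * fps_exp x) = 1"
    by (rule subdegreeI) auto
  have ne: "fps_exp (1::real) - 1 \<noteq> 0"
    using s1 by auto
  show ?thesis using fps_times_divide_eq[OF ne] s1 s2 by simp
qed

lemma bern_rec:
  fixes x :: real
  shows "(\<Sum>i=0..n. real (n choose i) * bernpoly i x) = bernpoly n x + real n * x^(n-1)"
proof -
  define G where "G = fps_X * fps_exp x / (fps_exp 1 - 1)"
  have "G * fps_exp 1 = G + fps_X * fps_exp x"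
    using G_mult[of x] unfolding G_def[symmetric] by (simp add: algebra_simps)
  hence "(G * fps_exp 1) $ n = (G + fps_X * fps_exp x) $ n" by simp
  moreover have "(G * fps_exp 1) $ n = (\<Sum>i=0..n. G$i * (1 / fact (n-i)))"
    by (simp add: fps_mult_nth)
  moreover have "(fps_X * fps_exp x) $ n = (if n = 0 then 0 else x^(n-1)/fact (n-1))"
    by simp
  ultimately have e: "(\<Sum>i=0..n. G$i * (1 / fact (n-i))) = G$n + (if n = 0 then 0 else x^(n-1)/fact (n-1))"
    by simp
  have "(\<Sum>i=0..n. real (n choose i) * bernpoly i x) = fact n * (\<Sum>i=0..n. G$i * (1 / fact (n-i)))"
    unfolding sum_distrib_left
  proof (rule sum.cong)
    fix i assume "i \<in> {0..n}"
    hence i: "i \<le> n" by simp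
    show "real (n choose i) * bernpoly i x = fact n * (G $ i * (1 / fact (n - i)))"
      unfolding bernpoly_def G_def[symmetric] binomial_fact[OF i]
      by (simp add: field_simps)
  qed simp
  also have "\<dots> = bernpoly n x + real n * x^(n-1)"
  proof (cases n)
    case 0 then show ?thesis using e by (simp add: bernpoly_def G_def)
  next
    case (Suc m)
    have "fact n * (x^(n-1)/fact (n-1)) = real n * x^(n-1)"
      using Suc by (simp add: field_simps)
    then show ?thesis using e Suc by (simp add: bernpoly_def G_def[symmetric] distrib_left)
  qed
  finally show ?thesis .
qed

definition LB :: "real \<Rightarrow> nat \<Rightarrow> real poly \<Rightarrow> real" where
  "LB x N p = (\<Sum>i\<le>N. coeff p i * bernpoly i x)"

lemma LB_sum: "LB x N (sum f A) = (\<Sum>a\<in>A. LB x N (f a))"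
  unfolding LB_def coeff_sum sum_distrib_right by (rule sum.swap)

lemma pcompose_power': "pcompose (p ^ n) q = (pcompose p q) ^ n"
  by (induction n) (simp_all add: pcompose_mult one_pCons pcompose_pCons)

lemma pderiv_sum': "pderiv (sum f A) = (\<Sum>a\<in>A. pderiv (f a))"
  using higher_pderiv_sum[of 1 f A] by simp

lemma LB_monom_step:
  assumes "i \<le> N"
  shows "LB x N (pcompose (monom c i) [:1,1:]) - LB x N (monom c i) = poly (pderiv (monom c i)) x"
proof -
  have pc: "pcompose (monom c i) [:1,1:] = smult c ([:1,1:]^i)"
    by (simp add: monom_altdef pcompose_smult pcompose_power' pcompose_pCons)
  have "LB x N (smult c ([:1,1:]^i)) = c * (\<Sum>j\<le>N. coeff ([:1,1:]^i) j * bernpoly j x)"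
    by (simp add: LB_def sum_distrib_left mult.assoc)
  also have "(\<Sum>j\<le>N. coeff ([:1,1:]^i) j * bernpoly j x) = (\<Sum>j\<le>i. coeff ([:1,1:]^i) j * bernpoly j x)"
  proof (rule sum.mono_neutral_right)
    show "\<forall>j\<in>{..N} - {..i}. coeff ([:1, 1:] ^ i) j * bernpoly j x = 0"
    proof
      fix j assume "j \<in> {..N} - {..i}"
      hence "degree ([:1::real,1:]^i) < j" using degree_power_le[of "[:1::real,1:]" i] by auto
      thus "coeff ([:1, 1:] ^ i) j * bernpoly j x = 0" by (simp add: coeff_eq_0)
    qed
  qed (use assms in auto)
  also have "\<dots> = (\<Sum>j=0..i. real (i choose j) * bernpoly j x)"
    by (rule sum.cong) (auto simp: coeff_linear_poly_power)
  also have "\<dots> = bernpoly i x + real i * x^(i-1)" by (rule bern_rec)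
  finally have 1: "LB x N (smult c ([:1,1:]^i)) = c * (bernpoly i x + real i * x^(i-1))" .
  have "LB x N (monom c i) = (\<Sum>j\<le>N. if j = i then c * bernpoly j x else 0)"
    unfolding LB_def by (rule sum.cong) (auto simp: coeff_monom)
  hence 2: "LB x N (monom c i) = c * bernpoly i x"
    using assms by simp
  show ?thesis unfolding pc 1 2 by (simp add: pderiv_monom poly_monom algebra_simps)
qed

lemma LB_step:
  assumes "degree p \<le> N"
  shows "LB x N (pcompose p [:1,1:]) - LB x N p = poly (pderiv p) x"
proof -
  have p: "p = (\<Sum>i\<le>N. monom (coeff p i) i)" using poly_as_sum_of_monoms'[OF assms] by simp
  have "LB x N (pcompose p [:1,1:]) - LB x N p
      = (\<Sum>i\<le>N. LB x N (pcompose (monom (coeff p i) i) [:1,1:]) - LB x N (monom (coeff p i) i))"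
    by (subst (1 2) p) (simp add: pcompose_sum LB_sum sum_subtractf)
  also have "\<dots> = (\<Sum>i\<le>N. poly (pderiv (monom (coeff p i) i)) x)"
    by (rule sum.cong) (auto simp: LB_monom_step)
  also have "\<dots> = poly (pderiv p) x"
    by (subst (2) p) (simp add: pderiv_sum' poly_sum)
  finally show ?thesis .
qed

theorem mainTheorem4:
  fixes n k :: nat and x :: real
  assumes "k \<le> n"
  shows "(\<Sum>j=0..n-k. real (n - k choose j) * bernpoly (j + k) x)
       = (\<Sum>j=0..k. real (k choose j) * (-1) ^ j * bernpoly (n - j) x)
         + poly (pderiv ([:0, 1:] ^ (n - k) * [:-1, 1:] ^ k)) x"
proof -
  define m where "m = n - k"
  have nmk: "n = m + k" using assms m_def by simp
  define p :: "real poly" where "p = [:0, 1:] ^ m * [:-1, 1:] ^ k"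
  have dp: "degree p \<le> n" unfolding p_def nmk
    by (rule order.trans[OF degree_mult_le]) (intro add_mono order.trans[OF degree_power_le]; simp)
  have pc: "pcompose p [:1,1:] = monom 1 k * [:1,1:]^m"
    by (simp add: p_def pcompose_mult pcompose_power' pcompose_pCons monom_altdef mult.commute)
  have pm: "p = monom 1 m * [:-1,1:]^k" by (simp add: p_def monom_altdef)
  have A: "LB x n (pcompose p [:1,1:]) = (\<Sum>j=0..m. real (m choose j) * bernpoly (j + k) x)"
  proof -
    have "(\<Sum>j=0..m. real (m choose j) * bernpoly (j + k) x) = (\<Sum>i\<in>{k..n}. coeff (pcompose p [:1,1:]) i * bernpoly i x)"
      by (rule sum.reindex_bij_witness[where i="\<lambda>i. i - k" and j="\<lambda>j. j + k"])
         (auto simp: nmk pc coeff_monom_mult coeff_linear_poly_power)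
    also have "\<dots> = LB x n (pcompose p [:1,1:])"
      unfolding LB_def
      by (rule sum.mono_neutral_left) (auto simp: pc coeff_monom_mult)
    finally show ?thesis by simp
  qed
  have B: "LB x n p = (\<Sum>j=0..k. real (k choose j) * (-1) ^ j * bernpoly (n - j) x)"
  proof -
    have "(\<Sum>j=0..k. real (k choose j) * (-1) ^ j * bernpoly (n - j) x) = (\<Sum>i\<in>{m..n}. coeff p i * bernpoly i x)"
    proof (rule sum.reindex_bij_witness[where i="\<lambda>i. n - i" and j="\<lambda>j. n - j"])
      fix j assume j: "j \<in> {0..k}"
      have "coeff p (n - j) = real (k choose j) * (-1)^j"
        using j by (simp add: nmk pm coeff_monom_mult coeff_linear_poly_power binomial_symmetric[symmetric])
      thus "coeff p (n - j) * bernpoly (n - j) x = real (k choose j) * (-1) ^ j * bernpoly (n - j) x"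
        by simp
    qed (auto simp: nmk)
    also have "\<dots> = LB x n p"
      unfolding LB_def
      by (rule sum.mono_neutral_left) (auto simp: pm coeff_monom_mult)
    finally show ?thesis by simp
  qed
  show ?thesis using LB_step[OF dp, of x] A B by (simp add: p_def m_def)
qed
end
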